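(* $$\sum_{k=1}^\infty\frac{(35k^2-316k+43)8^k}{k\binom{4k}k}=108+\frac{15}2\pi.$$ *)

theory Defs
  imports "HOL-Analysis.Analysis"
begin

end

theory Submission
  imports Defs
begin

definition uu :: "real \<Rightarrow> real" where "uu t = 1 - 8*t + 24*t^2 - 24*t^3 + 8*t^4"
definition uu' :: "real \<Rightarrow> real" where "uu' t = - 8 + 48*t - 72*t^2 + 32*t^3"
definition BB :: "real \<Rightarrow> real" where
  "BB t = -160 + 555*t + 2517*t^2 - 14436*t^3 + 26160*t^4 - 23016*t^5 + 10152*t^6 - 1824*t^7"
definition BB' :: "real \<Rightarrow> real" where
  "BB' t = 555 + 2*2517*t - 3*14436*t^2 + 4*26160*t^3 - 5*23016*t^4 + 6*10152*t^5 - 7*1824*t^6"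
definition pp :: "real \<Rightarrow> real" where "pp t = 2*t - 2*t^2"
definition qq :: "real \<Rightarrow> real" where "qq t = 1 - 4*t + 2*t^2"
definition GG :: "real \<Rightarrow> real" where "GG t = 8*(1-t)^3*(43*(uu t)^2 - 351*uu t + 70)/(uu t)^3"

lemma poly_id: "8*(1-t)^3*(43*(uu t)^2 - 351*uu t + 70) =
   (BB' t * uu t - 2 * BB t * uu' t) - 43/4 * uu' t * (uu t)^2 + 15*(2*t^2-2*t+1)*(uu t)^2"
  unfolding uu_def uu'_def BB_def BB'_def
  by (simp add: algebra_simps power2_eq_square power3_eq_cube power4_eq_xxxx eval_nat_numeral)

lemma uu_alt: "uu t = 1 - 8*t*(1-t)^3"
  unfolding uu_def by (simp add: algebra_simps power2_eq_square power3_eq_cube power4_eq_xxxx eval_nat_numeral)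

lemma xx_le: "8*t*(1-t)^3 \<le> (27/32::real)"
proof -
  have "27 - 256*t*(1-t)^3 = (4*t-1)^2 * ((4*t-5)^2 + 2)"
    by (simp add: algebra_simps power2_eq_square power3_eq_cube power4_eq_xxxx eval_nat_numeral)
  moreover have "(4*t-1)^2 * ((4*t-5)^2 + 2) \<ge> 0" by simp
  ultimately show ?thesis by linarith
qed

lemma uu_ge: "uu t \<ge> 5/32"
  using xx_le[of t] unfolding uu_alt by linarith

lemma arc_gen:
  fixes s d n :: real
  assumes "s \<noteq> 0"
  shows "inverse (1 + (d/s)^2) * (n / (s * s)) = n/(s^2+d^2)"
proof -
  have p: "s^2 + d^2 > 0" using assms by (simp add: add_pos_nonneg)
  have "inverse (1 + (d/s)^2) = s^2/(s^2+d^2)"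
    using assms p by (simp add: field_simps power2_eq_square)
  then show ?thesis using assms p by (simp add: power2_eq_square)
qed

lemma arc_alg:
  fixes P Q P' Q' :: real
  assumes "P + Q \<noteq> 0"
  shows "inverse (1 + ((P - Q)/(P + Q))^2) * (((P' - Q')*(P + Q) - (P - Q)*(P' + Q'))/((P + Q)*(P + Q)))
         = (P'*Q - P*Q')/(P^2+Q^2)"
proof -
  have e1: "(P' - Q')*(P + Q) - (P - Q)*(P' + Q') = 2*(P'*Q - P*Q')" by (simp add: algebra_simps)
  have e2: "(P+Q)^2 + (P-Q)^2 = 2*(P^2+Q^2)" by (simp add: algebra_simps power2_eq_square)
  show ?thesis unfolding arc_gen[OF assms] e1 e2 by (rule mult_divide_mult_cancel_left) simp
qed

lemma arc_alg2:
  fixes P Q P' Q' :: real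
  assumes "P - Q \<noteq> 0"
  shows "inverse (1 + (-(P + Q)/(P - Q))^2) * (((-(P' + Q'))*(P - Q) - (-(P + Q))*(P' - Q'))/((P - Q)*(P - Q)))
         = (P'*Q - P*Q')/(P^2+Q^2)"
proof -
  have e1: "(-(P' + Q'))*(P - Q) - (-(P + Q))*(P' - Q') = 2*(P'*Q - P*Q')" by (simp add: algebra_simps)
  have e2: "(P-Q)^2 + (-(P+Q))^2 = 2*(P^2+Q^2)" by (simp add: algebra_simps power2_eq_square)
  show ?thesis unfolding arc_gen[OF assms] e1 e2 by (rule mult_divide_mult_cancel_left) simp
qed

lemma pq_uu: "(pp t)^2 + (qq t)^2 = uu t"
  unfolding pp_def qq_def uu_def by (simp add: algebra_simps power2_eq_square power3_eq_cube power4_eq_xxxx eval_nat_numeral)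

lemma pq_w: "(2 - 4*t) * qq t - pp t * (-4 + 4*t) = 2*(2*t^2-2*t+1)"
  unfolding pp_def qq_def by (simp add: algebra_simps power2_eq_square)

lemma d_pp: "DERIV pp t :> (2 - 4*t)"
  unfolding pp_def[abs_def] by (auto intro!: derivative_eq_intros)

lemma d_qq: "DERIV qq t :> (-4 + 4*t)"
  unfolding qq_def[abs_def] by (auto intro!: derivative_eq_intros)

lemma d_arc1:
  assumes "pp t + qq t \<noteq> 0"
  shows "((\<lambda>t. arctan ((pp t - qq t)/(pp t + qq t))) has_real_derivative 2*(2*t^2-2*t+1)/uu t) (at t)"
proof -
  have u: "(pp t)^2 + (qq t)^2 \<noteq> 0" using uu_ge[of t] pq_uu[of t] by simp
  have d1: "DERIV (\<lambda>t. pp t - qq t) t :> (2 - 4*t) - (-4 + 4*t)"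
    by (intro DERIV_diff d_pp d_qq)
  have d2: "DERIV (\<lambda>t. pp t + qq t) t :> (2 - 4*t) + (-4 + 4*t)"
    by (intro DERIV_add d_pp d_qq)
  note d3 = DERIV_chain2[OF DERIV_arctan DERIV_divide[OF d1 d2 assms]]
  show ?thesis using d3 arc_alg[OF assms, of "2 - 4*t" "-4 + 4*t"] pq_uu[of t] pq_w[of t]
    by simp
qed


lemma d_arc2:
  assumes "pp t - qq t \<noteq> 0"
  shows "((\<lambda>t. arctan (-(pp t + qq t)/(pp t - qq t))) has_real_derivative 2*(2*t^2-2*t+1)/uu t) (at t)"
proof -
  have d1: "DERIV (\<lambda>t. -(pp t + qq t)) t :> -((2 - 4*t) + (-4 + 4*t))"
    by (intro DERIV_minus DERIV_add d_pp d_qq)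
  have d2: "DERIV (\<lambda>t. pp t - qq t) t :> (2 - 4*t) - (-4 + 4*t)"
    by (intro DERIV_diff d_pp d_qq)
  note d3 = DERIV_chain2[OF DERIV_arctan DERIV_divide[OF d1 d2 assms]]
  show ?thesis using d3 arc_alg2[OF assms, of "2 - 4*t" "-4 + 4*t"] pq_uu[of t] pq_w[of t]
    by simp
qed

lemma d_uu: "DERIV uu t :> uu' t"
  unfolding uu_def[abs_def] uu'_def
  by (auto intro!: derivative_eq_intros simp: algebra_simps)

lemma d_BB: "DERIV BB t :> BB' t"
  unfolding BB_def[abs_def] BB'_def
  by (auto intro!: derivative_eq_intros simp: algebra_simps)

lemma GG_eq: "GG t = (BB' t * uu t - 2 * BB t * uu' t)/(uu t)^3 - 43/4 * (uu' t / uu t) + 15/2 * (2*(2*t^2-2*t+1)/uu t)"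
proof -
  have u: "uu t \<noteq> 0" using uu_ge[of t] by simp
  have "GG t = ((BB' t * uu t - 2 * BB t * uu' t) - 43/4 * uu' t * (uu t)^2 + 15*(2*t^2-2*t+1)*(uu t)^2)/(uu t)^3"
    unfolding GG_def poly_id ..
  also have "\<dots> = (BB' t * uu t - 2 * BB t * uu' t)/(uu t)^3 - 43/4 * (uu' t / uu t) + 15/2 * (2*(2*t^2-2*t+1)/uu t)"
    using u by (simp add: field_simps power2_eq_square power3_eq_cube)
  finally show ?thesis .
qed

definition HH :: "(real \<Rightarrow> real) \<Rightarrow> real \<Rightarrow> real" where
  "HH A t = BB t / (uu t)^2 - 43/4 * ln (uu t) + 15/2 * A t"

lemma d_HH:
  assumes "(A has_real_derivative 2*(2*t^2-2*t+1)/uu t) (at t)"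
  shows "(HH A has_real_derivative GG t) (at t)"
proof -
  have u: "uu t > 0" using uu_ge[of t] by simp
  have a: "DERIV (\<lambda>t. BB t / (uu t)^2) t :> (BB' t * (uu t)^2 - BB t * (of_nat 2 * (uu' t * (uu t)^(2 - Suc 0))))/((uu t)^2 * (uu t)^2)"
    using u by (intro DERIV_divide d_BB DERIV_power d_uu) auto
  have b: "DERIV (\<lambda>t. ln (uu t)) t :> inverse (uu t) * uu' t"
    by (rule DERIV_chain2[OF DERIV_ln[OF u] d_uu])
  have d: "DERIV (HH A) t :> (BB' t * (uu t)^2 - BB t * (of_nat 2 * (uu' t * (uu t)^(2 - Suc 0))))/((uu t)^2 * (uu t)^2)
      - 43/4 * (inverse (uu t) * uu' t) + 15/2 * (2*(2*t^2-2*t+1)/uu t)"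
    unfolding HH_def[abs_def] by (intro DERIV_add DERIV_diff DERIV_cmult a b assms)
  have e: "(BB' t * (uu t)^2 - BB t * (of_nat 2 * (uu' t * (uu t)^(2 - Suc 0))))/((uu t)^2 * (uu t)^2)
      = (BB' t * uu t - 2 * BB t * uu' t)/(uu t)^3"
    using u by (simp add: field_simps power2_eq_square power3_eq_cube)
  have f2: "inverse (uu t) * uu' t = uu' t / uu t" by (simp add: divide_inverse mult.commute)
  have f: "(BB' t * uu t - 2 * BB t * uu' t)/(uu t)^3 - 43/4 * (uu' t / uu t) + 15/2 * (2*(2*t^2-2*t+1)/uu t) = GG t"
    by (rule GG_eq[symmetric])
  from d show ?thesis by (simp only: e f2 f)
qed


definition A1 :: "real \<Rightarrow> real" where "A1 t = arctan ((pp t - qq t)/(pp t + qq t))"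
definition A2 :: "real \<Rightarrow> real" where "A2 t = arctan (-(pp t + qq t)/(pp t - qq t))"

lemma int1: "(GG has_integral (HH A1 (1/4) - HH A1 0)) {0..1/4}"
proof (rule fundamental_theorem_of_calculus)
  fix x :: real assume x: "x \<in> {0..1/4}"
  have "pp x + qq x \<noteq> 0" using x unfolding pp_def qq_def by (auto simp: power2_eq_square)
  then have "(A1 has_real_derivative 2*(2*x^2-2*x+1)/uu x) (at x)"
    unfolding A1_def[abs_def] by (rule d_arc1)
  then have "(HH A1 has_real_derivative GG x) (at x)" by (rule d_HH)
  then show "(HH A1 has_vector_derivative GG x) (at x within {0..1/4})"
    by (simp add: has_real_derivative_iff_has_vector_derivative has_vector_derivative_at_within)
qed simp

lemma int2: "(GG has_integral (HH A2 1 - HH A2 (1/4))) {1/4..1}"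
proof (rule fundamental_theorem_of_calculus)
  fix x :: real assume x: "x \<in> {1/4..1}"
  have h: "(x - 1/4) * (1 - x) \<ge> 0" using x by (intro mult_nonneg_nonneg) auto
  have h2: "(x - 1/4) * (1 - x) = - (x*x) + 5/4*x - 1/4" by (simp add: field_simps)
  have h3: "pp x - qq x = -1 + 6*x - 4*(x*x)" unfolding pp_def qq_def by (simp add: power2_eq_square)
  have x': "1/4 \<le> x" using x by auto
  have "pp x - qq x > 0" unfolding h3 using h h2 x' by linarith
  then have "(A2 has_real_derivative 2*(2*x^2-2*x+1)/uu x) (at x)"
    unfolding A2_def[abs_def] by (intro d_arc2) simp
  then have "(HH A2 has_real_derivative GG x) (at x)" by (rule d_HH)
  then show "(HH A2 has_vector_derivative GG x) (at x within {1/4..1})"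
    by (simp add: has_real_derivative_iff_has_vector_derivative has_vector_derivative_at_within)
qed simp

lemma int_GG: "(GG has_integral (108 + 15/2*pi)) {0..1}"
proof -
  have "(GG has_integral ((HH A1 (1/4) - HH A1 0) + (HH A2 1 - HH A2 (1/4)))) {0..1}"
    by (rule has_integral_combine[OF _ _ int1 int2]) auto
  moreover have "(HH A1 (1/4) - HH A1 0) + (HH A2 1 - HH A2 (1/4)) = 108 + 15/2*pi"
  proof -
    have v1: "A1 (1/4) = arctan (1/2)" unfolding A1_def pp_def qq_def by (simp add: power2_eq_square)
    have v2: "A1 0 = - pi/4" unfolding A1_def pp_def qq_def by (simp add: arctan_minus)
    have v3: "A2 1 = pi/4" unfolding A2_def pp_def qq_def by simp
    have v4: "A2 (1/4) = - arctan 2" unfolding A2_def pp_def qq_def by (simp add: power2_eq_square arctan_minus)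
    have v5: "arctan (1/2) = pi/2 - arctan 2" using arctan_inverse[of 2] by simp
    have u1: "uu (1/4) > 0" using uu_ge[of "1/4"] by simp
    have "HH A1 (1/4) - HH A2 (1/4) = 15/2 * (arctan (1/2) + arctan 2)"
      unfolding HH_def v1 v4 by simp
    moreover have "HH A2 1 - HH A1 0 = 108 + 15/2 * pi/2"
      unfolding HH_def v2 v3 by (simp add: uu_def BB_def)
    ultimately show ?thesis unfolding v5 by simp
  qed
  ultimately show ?thesis by simp
qed

lemma beta_nat:
  assumes k: "k \<ge> 1"
  shows "((\<lambda>t::real. t^(k-1) * (1-t)^(3*k)) has_integral (1/(real k * real ((4*k) choose k)))) {0..1}"
proof -
  have h: "((\<lambda>t. t powr (real k - 1) * (1 - t) powr (real (3*k) + 1 - 1)) has_integral Beta (real k) (real (3*k) + 1)) {0..1}"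
    using k by (intro has_integral_Beta_real) auto
  have g1: "Gamma (real k) = fact (k-1)"
    using k Gamma_fact[of "k-1"] by (simp add: of_nat_diff)
  have g2: "Gamma (real (3*k) + 1) = fact (3*k)"
    using Gamma_fact[of "3*k"] by (simp add: add.commute)
  have g3: "Gamma (real k + (real (3*k) + 1)) = fact (4*k)"
    using Gamma_fact[of "4*k"] by (simp add: add.commute)
  have fk: "fact k = real k * fact (k-1)"
    using k by (metis fact_Suc Suc_diff_1 of_nat_Suc le_less_trans less_one linorder_not_less mult.commute nat_less_le not_one_le_zero order_le_less_trans zero_less_one_class.zero_le_one One_nat_def) 
  have bc: "real ((4*k) choose k) = fact (4*k) / (fact k * fact (3*k))"
    using binomial_fact[of k "4*k"] by simp
  have "Beta (real k) (real (3*k) + 1) = 1/(real k * real ((4*k) choose k))"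
    unfolding Beta_def g1 g2 g3 bc fk using k by (simp add: field_simps)
  with h have h2: "((\<lambda>t. t powr (real k - 1) * (1 - t) powr (real (3*k))) has_integral (1/(real k * real ((4*k) choose k)))) {0..1}"
    by simp
  show ?thesis
  proof (rule has_integral_spike_finite_eq[of "{0,1}", THEN iffD1, OF _ _ h2])
    fix t :: real assume "t \<in> {0..1} - {0,1}"
    then have "0 < t" "0 < 1 - t" by auto
    then show "t ^ (k - 1) * (1 - t) ^ (3 * k) = t powr (real k - 1) * (1 - t) powr real (3 * k)"
    proof -
      have e: "real k - 1 = real (k-1)" using k by (simp add: of_nat_diff)
      have a1: "t powr (real k - 1) = t ^ (k-1)" by (metis e powr_realpow \<open>0 < t\<close>)
      have a2: "(1-t) powr (real (3*k)) = (1-t) ^ (3*k)" by (metis powr_realpow \<open>0 < 1 - t\<close>)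
      show ?thesis by (simp only: a1 a2)
    qed
  qed auto
qed


definition cc :: "real \<Rightarrow> real" where "cc m = 35*m^2 - 316*m + 43"
definition QQ :: "real \<Rightarrow> real \<Rightarrow> real" where
  "QQ n y = (35*n^2 - 246*n - 238) + (-70*n^2 + 562*n + 265)*y + cc n * y^2"

lemma QQ_step: "QQ n y - y * QQ (n+1) y = cc (n+1) * (1-y)^3"
  unfolding QQ_def cc_def by (simp add: algebra_simps power2_eq_square power3_eq_cube)

lemma psum: "(1-y)^3 * (\<Sum>j<n. cc (real j + 1) * y^j) = (43*(1-y)^2 - 351*(1-y) + 70) - y^n * QQ (real n) y"
proof (induction n)
  case 0
  show ?case unfolding QQ_def cc_def by (simp add: algebra_simps power2_eq_square power3_eq_cube)
next
  case (Suc n)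
  have "(1-y)^3 * (\<Sum>j<Suc n. cc (real j + 1) * y^j) = (1-y)^3 * (\<Sum>j<n. cc (real j + 1) * y^j) + y^n * (cc (real n + 1) * (1-y)^3)"
    by (simp add: algebra_simps)
  also have "\<dots> = (43*(1-y)^2 - 351*(1-y) + 70) - y^n * (QQ (real n) y - cc (real n + 1) * (1-y)^3)"
    unfolding Suc.IH by (simp add: algebra_simps)
  also have "QQ (real n) y - cc (real n + 1) * (1-y)^3 = y * QQ (real n + 1) y"
    using QQ_step[of "real n" y] by simp
  finally show ?case by (simp add: algebra_simps)
qed

definition xx :: "real \<Rightarrow> real" where "xx t = 8*t*(1-t)^3"
definition ff :: "nat \<Rightarrow> real \<Rightarrow> real" where "ff k t = cc (real k) * 8^k * (t^(k-1) * (1-t)^(3*k))"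
definition EE :: "nat \<Rightarrow> real \<Rightarrow> real" where "EE N t = 8*(1-t)^3 * (xx t)^N * QQ (real N) (xx t) / (uu t)^3"

lemma uu_xx: "uu t = 1 - xx t" unfolding uu_alt xx_def ..

lemma sum_ff: "(\<Sum>j<N. ff (j+1) t) = GG t - EE N t"
proof -
  have u: "uu t \<noteq> 0" using uu_ge[of t] by simp
  have f: "ff (j+1) t = 8*(1-t)^3 * (cc (real j + 1) * (xx t)^j)" for j
  proof -
    have p1: "(1-t)^(3*(j+1)) = (1-t)^3 * ((1-t)^3)^j"
      by (simp add: power_add power_mult[symmetric])
    have p2: "(8*t*(1-t)^3)^j = 8^j * t^j * ((1-t)^3)^j"
      by (simp add: power_mult_distrib)
    show ?thesis unfolding ff_def xx_def p1 p2 by (simp add: algebra_simps)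
  qed
  have "(\<Sum>j<N. ff (j+1) t) = 8*(1-t)^3 * (\<Sum>j<N. cc (real j + 1) * (xx t)^j)"
    unfolding f by (simp add: sum_distrib_left)
  also have "(\<Sum>j<N. cc (real j + 1) * (xx t)^j) = ((43*(uu t)^2 - 351*(uu t) + 70) - (xx t)^N * QQ (real N) (xx t)) / (uu t)^3"
    using psum[of "xx t" N] u unfolding uu_xx by (simp add: field_simps)
  finally show ?thesis unfolding GG_def EE_def by (simp add: diff_divide_distrib right_diff_distrib mult.assoc)
qed


lemma QQ_bound:
  assumes "n \<ge> 0" "0 \<le> y" "y \<le> 1"
  shows "\<bar>QQ n y\<bar> \<le> 1200 * (n+1)^2"
proof -
  have y2: "0 \<le> y^2" "y^2 \<le> 1" using assms by (auto simp: power_le_one)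
  have n2: "n^2 \<ge> 0" by simp
  have "\<bar>QQ n y\<bar> \<le> \<bar>35*n^2 - 246*n - 238\<bar> + \<bar>(-70*n^2 + 562*n + 265)*y\<bar> + \<bar>cc n * y^2\<bar>"
    unfolding QQ_def by (rule order_trans[OF abs_triangle_ineq add_right_mono[OF abs_triangle_ineq]])
  also have "\<dots> \<le> \<bar>35*n^2 - 246*n - 238\<bar> + \<bar>-70*n^2 + 562*n + 265\<bar> + \<bar>cc n\<bar>"
    using assms y2 by (intro add_mono order_refl) (auto simp: abs_mult intro: mult_left_le)
  also have "\<dots> \<le> 140*n^2 + 1124*n + 546"
    unfolding cc_def using assms n2 by (simp add: abs_le_iff abs_if)
  also have "\<dots> \<le> 1200 * (n+1)^2"
    using assms n2 by (simp add: power2_eq_square algebra_simps)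
  finally show ?thesis .
qed

lemma EE_bound:
  assumes "t \<in> {0..1}"
  shows "norm (EE N t) \<le> 8 * 1200 * (32/5)^3 * ((real N + 1)^2 * (27/32)^N)"
proof -
  have t: "0 \<le> t" "t \<le> 1" using assms by auto
  have x0: "0 \<le> xx t" unfolding xx_def using t by simp
  have x1: "xx t \<le> 27/32" unfolding xx_def using xx_le[of t] by simp
  have u: "uu t \<ge> 5/32" by (rule uu_ge)
  have a1: "\<bar>8*(1-t)^3\<bar> \<le> 8" using t by (simp add: power_le_one)
  have a2: "\<bar>(xx t)^N\<bar> \<le> (27/32)^N" using x0 x1 by (simp add: power_mono)
  have a3: "\<bar>QQ (real N) (xx t)\<bar> \<le> 1200 * (real N + 1)^2" using x0 x1 by (intro QQ_bound) auto
  have a4: "\<bar>1/(uu t)^3\<bar> \<le> (32/5)^3"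
  proof -
    have "(5/32)^3 \<le> (uu t)^3" using u by (intro power_mono) auto
    moreover have "0 < (uu t)^3 * (5/32)^3" using u by simp
    ultimately have "1/(uu t)^3 \<le> 1/(5/32)^3" by (intro divide_left_mono) auto
    then show ?thesis using u by (simp add: power_divide)
  qed
  have "norm (EE N t) = \<bar>8*(1-t)^3\<bar> * \<bar>(xx t)^N\<bar> * \<bar>QQ (real N) (xx t)\<bar> * \<bar>1/(uu t)^3\<bar>"
    unfolding EE_def by (simp add: abs_mult abs_divide)
  also have "\<dots> \<le> 8 * (27/32)^N * (1200 * (real N + 1)^2) * (32/5)^3"
    by (intro mult_mono a1 a2 a3 a4) auto
  finally show ?thesis by (simp add: algebra_simps)
qed

lemma lim_bound: "(\<lambda>N. 8 * 1200 * (32/5)^3 * ((real N + 1)^2 * (27/32::real)^N)) \<longlonglongrightarrow> 0"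
proof -
  define r :: real where "r = sqrt (27/32)"
  have "sqrt (27/32) < sqrt (1::real)" by (subst real_sqrt_less_iff) simp
  then have r0: "0 \<le> r" "r < 1" unfolding r_def by auto
  have r2: "r^2 = 27/32" unfolding r_def by simp
  define g where "g N = real N * r^N + r^N" for N
  have "g \<longlonglongrightarrow> 0 + 0" unfolding g_def
    by (intro tendsto_add powser_times_n_limit_0 LIMSEQ_power_zero) (use r0 in auto)
  then have "(\<lambda>N. g N * g N) \<longlonglongrightarrow> 0 * 0" by (intro tendsto_mult) auto
  then have "(\<lambda>N. 8 * 1200 * (32/5)^3 * (g N * g N)) \<longlonglongrightarrow> 8 * 1200 * (32/5)^3 * 0"
    by (intro tendsto_mult tendsto_const) auto
  moreover have "g N * g N = (real N + 1)^2 * (27/32::real)^N" for N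
  proof -
    have "g N = (real N + 1) * r^N" unfolding g_def by (simp add: algebra_simps)
    then have "g N * g N = (real N + 1)^2 * (r^N)^2" by (simp add: power2_eq_square)
    also have "(r^N)^2 = (r^2)^N" by (metis power_mult mult.commute)
    finally show ?thesis unfolding r2 .
  qed
  ultimately show ?thesis by simp
qed


lemma int_ff: "(ff (j+1) has_integral (let k = j + 1 in
            (35 * real k ^ 2 - 316 * real k + 43) * 8 ^ k / (real k * real ((4 * k) choose k)))) {0..1}"
proof -
  have "((\<lambda>t. cc (real (j+1)) * 8^(j+1) * (t^(j+1-1) * (1-t)^(3*(j+1)))) has_integral
     cc (real (j+1)) * 8^(j+1) * (1/(real (j+1) * real ((4*(j+1)) choose (j+1))))) {0..1}"
    by (intro has_integral_mult_right beta_nat) simp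
  then show ?thesis unfolding ff_def[abs_def] Let_def cc_def by simp
qed

theorem lemma2p4:
  shows "(\<lambda>n. let k = n + 1 in
            (35 * real k ^ 2 - 316 * real k + 43) * 8 ^ k / (real k * real ((4 * k) choose k)))
         sums (108 + 15 / 2 * pi)"
proof -
  define a where "a = (\<lambda>n. let k = n + 1 in
            (35 * real k ^ 2 - 316 * real k + 43) * 8 ^ k / (real k * real ((4 * k) choose k)))"
  define V where "V = 108 + 15 / 2 * pi"
  have S: "((\<lambda>t. \<Sum>j<N. ff (j+1) t) has_integral (\<Sum>j<N. a j)) {0..1}" for N
    unfolding a_def by (intro has_integral_sum int_ff) auto
  have E: "(EE N has_integral (V - (\<Sum>j<N. a j))) {0..1}" for N
  proof -
    have "((\<lambda>t. GG t - (\<Sum>j<N. ff (j+1) t)) has_integral (V - (\<Sum>j<N. a j))) {0..1}"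
      unfolding V_def by (intro has_integral_diff int_GG S)
    moreover have "(\<lambda>t. GG t - (\<Sum>j<N. ff (j+1) t)) = EE N"
      by (rule ext) (simp only: sum_ff diff_diff_cancel)
    ultimately show ?thesis by simp
  qed
  have B: "norm (V - (\<Sum>j<N. a j)) \<le> 8 * 1200 * (32/5)^3 * ((real N + 1)^2 * (27/32::real)^N)" for N
  proof -
    have "norm (V - (\<Sum>j<N. a j)) \<le> 8 * 1200 * (32/5)^3 * ((real N + 1)^2 * (27/32::real)^N) * Henstock_Kurzweil_Integration.content {0..(1::real)}"
      by (rule has_integral_bound_real[OF _ _ E EE_bound]) auto
    then show ?thesis by simp
  qed
  have "(\<lambda>N. V - (\<Sum>j<N. a j)) \<longlonglongrightarrow> 0"
    by (rule Lim_null_comparison[OF _ lim_bound]) (use B in auto)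
  then have "(\<lambda>N. V - (V - (\<Sum>j<N. a j))) \<longlonglongrightarrow> V - 0"
    by (intro tendsto_diff tendsto_const)
  then have "(\<lambda>N. \<Sum>j<N. a j) \<longlonglongrightarrow> V" by simp
  then show ?thesis unfolding sums_def a_def V_def .
qed

end
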